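(* For an integer $x\ge3$ and an odd prime $p$, the following are equivalent: (1) $p$ divides $x$; (2) $\mathcal{F}_{\{1,x\}}\subseteq\mathcal{F}_{\{1,p,2p\}}$ and $\mathcal{F}_{\{2,x\}}\subseteq\mathcal{F}_{\{2,p,2p\}}$.
   Context: $\mathbb{N}=\{1,2,\dots\}$, $\mathbb{N}_0=\{0\}\cup\mathbb{N}$. The Kirch topology $\tau_K$ on $\mathbb{N}$ is generated by the base of all $a+b\mathbb{N}_0=\{a+bn:n\in\mathbb{N}_0\}$ with $a,b\in\mathbb{N}$ coprime and $b$ square-free. Closures $\overline{U}$ are in $\tau_K$; $\tau_y=\{U\in\tau_K:y\in U\}$. For finite $E\subseteq\mathbb{N}$, $\mathcal{F}_E=\{B\subseteq\mathbb{N}:\exists (U_y)_{y\in E}\in\prod_{y\in E}\tau_y\ (\bigcap_{y\in E}\overline{U_y}\subseteq B)\}$. *)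

theory Defs
  imports "HOL-Analysis.Analysis" "HOL-Computational_Algebra.Squarefree"
begin

text \<open>Positive integers are modelled as the nat set {1..} = {n. n \<ge> 1}.
  Basic Kirch sets a + b N0 with a, b positive, coprime, b square-free.\<close>

definition kirch_basic :: "nat set \<Rightarrow> bool" where
  "kirch_basic B \<longleftrightarrow> (\<exists>a b. a \<ge> 1 \<and> b \<ge> 1 \<and> coprime a b \<and> squarefree b
       \<and> B = {a + b * n | n. True})"

definition kirch_open :: "nat set \<Rightarrow> bool" where
  "kirch_open U \<longleftrightarrow> U \<subseteq> {1..} \<and> (\<forall>x\<in>U. \<exists>B. kirch_basic B \<and> x \<in> B \<and> B \<subseteq> U)"

lemma kirch_basic_sub: "kirch_basic B \<Longrightarrow> B \<subseteq> {1..}"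
  unfolding kirch_basic_def by auto

lemma squarefree_lcm_nat:
  assumes "squarefree (a::nat)" "squarefree b"
  shows "squarefree (lcm a b)"
proof -
  have a0: "a \<noteq> 0" and b0: "b \<noteq> 0" using assms not_squarefree_0 by metis+
  have "lcm a b \<noteq> 0" using a0 b0 by simp
  moreover have "\<forall>p. prime p \<longrightarrow> multiplicity p (lcm a b) \<le> 1"
    using assms a0 b0 by (simp add: multiplicity_lcm squarefree_factorial_semiring'')
  ultimately show ?thesis by (simp add: squarefree_factorial_semiring'')
qed

lemma istopology_kirch: "istopology kirch_open"
  unfolding istopology_def
proof (intro conjI allI impI)
  fix S T assume S: "kirch_open S" and T: "kirch_open T"
  show "kirch_open (S \<inter> T)"
    unfolding kirch_open_def
  proof (intro conjI ballI)
    show "S \<inter> T \<subseteq> {1..}" using S unfolding kirch_open_def by auto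
  next
    fix x assume x: "x \<in> S \<inter> T"
    obtain B1 where B1: "kirch_basic B1" "x \<in> B1" "B1 \<subseteq> S"
      using S x unfolding kirch_open_def by blast
    obtain B2 where B2: "kirch_basic B2" "x \<in> B2" "B2 \<subseteq> T"
      using T x unfolding kirch_open_def by blast
    obtain a1 b1 n1 where a1: "a1 \<ge> 1" "b1 \<ge> 1" "coprime a1 b1" "squarefree b1"
      "B1 = {a1 + b1 * n | n. True}" "x = a1 + b1 * n1"
      using B1 unfolding kirch_basic_def by blast
    obtain a2 b2 n2 where a2: "a2 \<ge> 1" "b2 \<ge> 1" "coprime a2 b2" "squarefree b2"
      "B2 = {a2 + b2 * n | n. True}" "x = a2 + b2 * n2"
      using B2 unfolding kirch_basic_def by blast
    \<comment> \<open>{x + lcm b1 b2 * n} is contained in both; lcm of square-free is square-free\<close>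
    define b where "b = lcm b1 b2"
    have xpos: "x \<ge> 1" using a1 by simp
    have cx1: "coprime x b1" using a1 gcd_add_mult[of b1 n1 a1]
      by (simp add: coprime_iff_gcd_eq_1 gcd.commute algebra_simps)
    have cx2: "coprime x b2" using a2 gcd_add_mult[of b2 n2 a2]
      by (simp add: coprime_iff_gcd_eq_1 gcd.commute algebra_simps)
    have cb: "coprime x b"
    proof -
      have c: "coprime x (b1 * b2)" using cx1 cx2 by simp
      have d: "lcm b1 b2 dvd b1 * b2" by (simp add: lcm_least)
      show ?thesis unfolding b_def by (rule coprime_divisors[OF dvd_refl d c])
    qed
    have bpos: "b \<ge> 1" unfolding b_def using a1 a2
      by (simp add: Suc_le_eq lcm_pos_nat)
    have sqf: "squarefree b" unfolding b_def by (rule squarefree_lcm_nat[OF a1(4) a2(4)])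
    let ?B = "{x + b * n | n. True}"
    have "kirch_basic ?B" unfolding kirch_basic_def using xpos bpos cb sqf by blast
    moreover have "x \<in> ?B" by force
    moreover have "?B \<subseteq> B1"
    proof
      fix y assume "y \<in> ?B"
      then obtain n where y: "y = x + b * n" by blast
      obtain k where k: "b = b1 * k" unfolding b_def by (meson dvd_lcm1 dvdE)
      have "y = a1 + b1 * (n1 + k * n)" using y k a1(6) by (simp add: algebra_simps)
      thus "y \<in> B1" using a1(5) by blast
    qed
    moreover have "?B \<subseteq> B2"
    proof
      fix y assume "y \<in> ?B"
      then obtain n where y: "y = x + b * n" by blast
      obtain k where k: "b = b2 * k" unfolding b_def by (meson dvd_lcm2 dvdE)
      have "y = a2 + b2 * (n2 + k * n)" using y k a2(6) by (simp add: algebra_simps)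
      thus "y \<in> B2" using a2(5) by blast
    qed
    ultimately show "\<exists>B. kirch_basic B \<and> x \<in> B \<and> B \<subseteq> S \<inter> T"
      using B1 B2 by blast
  qed
next
  fix K assume K: "\<forall>S\<in>K. kirch_open S"
  show "kirch_open (\<Union>K)" unfolding kirch_open_def
  proof (intro conjI ballI)
    show "\<Union>K \<subseteq> {1..}" using K unfolding kirch_open_def by blast
  next
    fix x assume "x \<in> \<Union>K"
    then obtain S where S: "S \<in> K" "x \<in> S" by blast
    then have "kirch_open S" using K by blast
    then obtain B where B: "kirch_basic B" "x \<in> B" "B \<subseteq> S"
      using S(2) unfolding kirch_open_def by blast
    have "B \<subseteq> \<Union>K" using B(3) S(1) by blast
    then show "\<exists>B. kirch_basic B \<and> x \<in> B \<and> B \<subseteq> \<Union>K"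
      using B by blast
  qed
qed

definition kirch :: "nat topology" where
  "kirch = topology kirch_open"

lemma openin_kirch: "openin kirch U \<longleftrightarrow> kirch_open U"
  unfolding kirch_def using istopology_kirch by (simp add: topology_inverse')

definition kirch_nbhds :: "nat \<Rightarrow> nat set set" where
  "kirch_nbhds y = {U. openin kirch U \<and> y \<in> U}"

definition kirchF :: "nat set \<Rightarrow> nat set set" where
  "kirchF E = {B. B \<subseteq> {1..} \<and>
     (\<exists>U. (\<forall>y\<in>E. U y \<in> kirch_nbhds y) \<and> (\<Inter>y\<in>E. kirch closure_of (U y)) \<subseteq> B)}"

end

theory Submission
  imports Defs
begin

lemma basic_open: "kirch_basic B \<Longrightarrow> openin kirch B"
  unfolding openin_kirch kirch_open_def using kirch_basic_sub by blast

lemma basic_ap: "y \<ge> 1 \<Longrightarrow> b \<ge> 1 \<Longrightarrow> coprime y b \<Longrightarrow> squarefree b \<Longrightarrow> openin kirch {y + b * n | n. True}"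
  by (rule basic_open) (auto simp: kirch_basic_def)

lemma topspace_kirch: "topspace kirch = {1..}"
proof
  show "topspace kirch \<subseteq> {1..}" unfolding topspace_def openin_kirch kirch_open_def by blast
  have "openin kirch {1 + 1 * n | n. True}" by (rule basic_ap) auto
  moreover have "{1 + 1 * n | n. True} = {(1::nat)..}"
  proof (intro equalityI subsetI)
    fix x :: nat assume "x \<in> {1..}" then show "x \<in> {1 + 1 * n | n. True}" by (intro CollectI exI[of _ "x - 1"]) simp
  qed auto
  ultimately show "{1..} \<subseteq> topspace kirch" by (metis openin_subset)
qed

lemma nbhd_basic:
  assumes "U \<in> kirch_nbhds y"
  obtains b where "b \<ge> 1" "squarefree b" "coprime y b" "{y + b * n | n. True} \<subseteq> U"
proof -
  from assms have "kirch_open U" "y \<in> U" by (auto simp: kirch_nbhds_def openin_kirch)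
  then obtain B where B: "kirch_basic B" "y \<in> B" "B \<subseteq> U" unfolding kirch_open_def by blast
  then obtain a b n0 where ab: "a \<ge> 1" "b \<ge> 1" "coprime a b" "squarefree b"
      "B = {a + b * n | n. True}" "y = a + b * n0" unfolding kirch_basic_def by blast
  have "coprime y b" using ab gcd_add_mult[of b n0 a]
    by (simp add: coprime_iff_gcd_eq_1 gcd.commute algebra_simps)
  moreover have "{y + b * n | n. True} \<subseteq> U"
  proof
    fix z assume "z \<in> {y + b * n | n. True}"
    then obtain n where "z = y + b * n" by blast
    then have "z = a + b * (n0 + n)" using ab by (simp add: algebra_simps)
    then show "z \<in> U" using ab B by blast
  qed
  ultimately show ?thesis using that ab by blast
qed

lemma sqf_dvd:
  fixes g k :: nat
  assumes "squarefree g" "\<And>q. prime q \<Longrightarrow> q dvd g \<Longrightarrow> q dvd k"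
  shows "g dvd k"
proof (cases "k = 0")
  case False
  have g0: "g \<noteq> 0" using assms(1) by (metis not_squarefree_0)
  show ?thesis
  proof (rule multiplicity_le_imp_dvd[OF g0])
    fix q :: nat assume q: "prime q"
    have "multiplicity q g \<le> 1" using assms(1) squarefree_factorial_semiring''[OF g0] q by blast
    moreover have "multiplicity q k \<ge> 1" if "multiplicity q g > 0"
    proof -
      have "q dvd g" using that prime_multiplicity_gt_zero_iff[OF prime_imp_prime_elem[OF q] g0] by blast
      then have "q dvd k" using assms(2)[OF q] by blast
      then have "multiplicity q k > 0" using prime_multiplicity_gt_zero_iff[OF prime_imp_prime_elem[OF q] False] by blast
      then show ?thesis by simp
    qed
    ultimately show "multiplicity q g \<le> multiplicity q k" by linarith
  qed
qed simp

lemma closure_nec: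
  assumes "m \<in> kirch closure_of {y + c * n | n. True}" "prime q" "q dvd c"
  shows "q dvd m \<or> int q dvd (int m - int y)"
proof (rule ccontr)
  assume H: "\<not> (q dvd m \<or> int q dvd (int m - int y))"
  have "m \<in> topspace kirch" using assms(1) closure_of_subset_topspace by (rule subsetD[rotated])
  then have m1: "m \<ge> 1" unfolding topspace_kirch by simp
  have "\<not> q dvd m" using H by simp
  then have "coprime q m" by (rule prime_imp_coprime[OF assms(2)])
  then have cmq: "coprime m q" by (simp add: coprime_commute)
  have q1: "q \<ge> 1" using prime_ge_2_nat[OF assms(2)] by simp
  have sq: "squarefree q" by (rule squarefree_prime[OF assms(2)])
  have o: "openin kirch {m + q * n | n. True}" by (rule basic_ap[OF m1 q1 cmq sq])
  have mm: "m \<in> {m + q * n | n. True}" by (intro CollectI exI[of _ 0]) simp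
  have cl: "\<forall>T. m \<in> T \<and> openin kirch T \<longrightarrow> (\<exists>z. z \<in> {y + c * n | n. True} \<and> z \<in> T)"
    using assms(1) unfolding in_closure_of by (rule conjunct2)
  have "\<exists>z. z \<in> {y + c * n | n. True} \<and> z \<in> {m + q * n | n. True}"
    by (rule cl[rule_format, OF conjI[OF mm o]])
  then obtain s t where st: "y + c * s = m + q * t" by blast
  obtain c' where c': "c = q * c'" using assms(3) by (elim dvdE)
  have "int (y + c * s) = int (m + q * t)" using st by (simp only:)
  then have eq: "int y + int q * int c' * int s = int m + int q * int t" using c' by simp
  have "int m - int y = int q * int c' * int s - int q * int t" using eq by linarith
  also have "\<dots> = int q * (int c' * int s - int t)" by (simp add: algebra_simps)
  finally have "int q dvd (int m - int y)" by simp
  then show False using H by simp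
qed

lemma closure_suff:
  assumes m1: "m \<ge> 1" and b1: "b \<ge> 1"
    and H: "\<And>q. prime q \<Longrightarrow> q dvd b \<Longrightarrow> q dvd m \<or> int q dvd (int m - int y)"
  shows "m \<in> kirch closure_of {y + b * n | n. True}"
  unfolding in_closure_of
proof (intro conjI allI impI)
  show "m \<in> topspace kirch" using m1 topspace_kirch by simp
  fix T assume T: "m \<in> T \<and> openin kirch T"
  then have "T \<in> kirch_nbhds m" by (simp add: kirch_nbhds_def)
  then obtain c where c: "c \<ge> 1" "squarefree c" "coprime m c" "{m + c * n | n. True} \<subseteq> T"
    by (rule nbhd_basic)
  define g where "g = gcd b c"
  define d where "d = int m - int y"
  have sg: "squarefree g" unfolding g_def by (rule squarefree_mono[OF _ c(2)]) simp
  have "g dvd nat \<bar>d\<bar>"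
  proof (rule sqf_dvd[OF sg])
    fix q :: nat assume q: "prime q" "q dvd g"
    then have qb: "q dvd b" and qc: "q dvd c" unfolding g_def by auto
    have "\<not> q dvd m"
    proof
      assume "q dvd m"
      then have "q dvd gcd m c" using qc by simp
      then have "q dvd 1" using c(3) by (metis coprime_iff_gcd_eq_1)
      then show False using q(1) by simp
    qed
    then have "int q dvd d" using H[OF q(1) qb] unfolding d_def by blast
    then show "q dvd nat \<bar>d\<bar>" by simp
  qed
  then have "int g dvd d" by simp
  then obtain w where w: "d = int g * w" by (elim dvdE)
  obtain u v where uv: "u * int b + v * int c = gcd (int b) (int c)" using bezout_int by blast
  have gi: "gcd (int b) (int c) = int g" unfolding g_def by simp
  define s0 where "s0 = u * w"
  define t0 where "t0 = - v * w"
  have e0: "int y + int b * s0 = int m + int c * t0"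
  proof -
    have "int b * s0 - int c * t0 = (u * int b + v * int c) * w" unfolding s0_def t0_def by (simp add: algebra_simps)
    also have "\<dots> = d" using uv gi w by simp
    finally show ?thesis unfolding d_def by simp
  qed
  define K where "K = \<bar>s0\<bar> + \<bar>t0\<bar>"
  define s where "s = s0 + K * int c"
  define t where "t = t0 + K * int b"
  have K0: "K \<ge> 0" unfolding K_def by simp
  have "K * int c \<ge> K" using c(1) K0 by (simp add: mult_le_cancel_left1)
  then have s0': "s \<ge> 0" unfolding s_def K_def by linarith
  have "K * int b \<ge> K" using b1 K0 by (simp add: mult_le_cancel_left1)
  then have t0': "t \<ge> 0" unfolding t_def K_def by linarith
  have e: "int y + int b * s = int m + int c * t"
    unfolding s_def t_def using e0 by (simp add: algebra_simps)
  define z where "z = y + b * nat s"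
  have "z \<in> {y + b * n | n. True}" unfolding z_def by blast
  moreover have "z = m + c * nat t"
  proof -
    have "int z = int y + int b * s" unfolding z_def using s0' by simp
    also have "\<dots> = int (m + c * nat t)" using e t0' by simp
    finally show ?thesis by (simp only: of_nat_eq_iff)
  qed
  then have "z \<in> T" using c(4) by blast
  ultimately show "\<exists>z. z \<in> {y + b * n | n. True} \<and> z \<in> T" by blast
qed

lemma prime_dvd_prime_eq: "prime (q::nat) \<Longrightarrow> prime p \<Longrightarrow> q dvd p \<Longrightarrow> q = p"
  by (simp add: primes_dvd_imp_eq)

lemma dir1:
  fixes x p y0 :: nat
  assumes x3: "x \<ge> 3" and p: "prime p" "odd p" and px: "p dvd x" and y0: "y0 = 1 \<or> y0 = 2"
  shows "kirchF {y0, x} \<subseteq> kirchF {y0, p, 2 * p}"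
proof
  fix B assume "B \<in> kirchF {y0, x}"
  then obtain U where B1: "B \<subseteq> {1..}" and U: "U y0 \<in> kirch_nbhds y0" "U x \<in> kirch_nbhds x"
    and UB: "kirch closure_of (U y0) \<inter> kirch closure_of (U x) \<subseteq> B"
    unfolding kirchF_def by auto
  obtain b where b: "b \<ge> 1" "squarefree b" "coprime x b" "{x + b * n | n. True} \<subseteq> U x"
    using U(2) by (rule nbhd_basic)
  have b0: "b \<noteq> 0" using b(1) by simp
  have nu2: "\<not> is_unit (2::nat)" by simp
  obtain k s where s: "b = 2 ^ k * s" "\<not> 2 dvd s"
    using multiplicity_decompose'[OF b0 nu2] by blast
  have s0: "s \<noteq> 0" using b0 s(1) by auto
  then have s1: "s \<ge> 1" by simp
  have sb: "s dvd b" using s(1) by simp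
  have ssq: "squarefree s" using squarefree_mono[OF sb b(2)] .
  have cps: "coprime p s" 
  proof (rule coprime_divisors[OF px _ b(3)])
    show "s dvd b" by (fact sb)
  qed
  have c2s: "coprime 2 s" using s(2) by (simp add: coprime_commute)
  have c2ps: "coprime (2 * p) s" using cps c2s by simp
  have p1: "p \<ge> 1" using prime_ge_2_nat[OF p(1)] by linarith
  define Wp where "Wp = {p + s * n | n. True}"
  define W2p where "W2p = {2 * p + s * n | n. True}"
  have Wp: "Wp \<in> kirch_nbhds p" unfolding kirch_nbhds_def Wp_def
    using basic_ap[of p s] p1 s1 cps ssq by force
  have W2p: "W2p \<in> kirch_nbhds (2 * p)" unfolding kirch_nbhds_def W2p_def
    using basic_ap[of "2 * p" s] p1 s1 c2ps ssq by force
  have p3: "p \<ge> 3" using prime_ge_2_nat[OF p(1)] p(2) by (cases "p = 2") auto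
  have ne: "y0 \<noteq> p" "y0 \<noteq> 2 * p" "p \<noteq> 2 * p" using y0 p3 by auto
  define U' where "U' = (\<lambda>z. if z = p then Wp else if z = 2 * p then W2p else U y0)"
  have "B \<in> kirchF {y0, p, 2 * p}" unfolding kirchF_def
  proof (intro CollectI conjI exI[of _ U'])
    show "B \<subseteq> {1..}" by (fact B1)
    show "\<forall>y\<in>{y0, p, 2 * p}. U' y \<in> kirch_nbhds y" using ne U(1) Wp W2p unfolding U'_def by simp
    show "(\<Inter>y\<in>{y0, p, 2 * p}. kirch closure_of U' y) \<subseteq> B"
    proof
      fix m assume "m \<in> (\<Inter>y\<in>{y0, p, 2 * p}. kirch closure_of U' y)"
      then have m: "m \<in> kirch closure_of (U y0)" "m \<in> kirch closure_of Wp" "m \<in> kirch closure_of W2p"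
        using ne unfolding U'_def by simp_all
      have "m \<in> topspace kirch" using m(2) closure_of_subset_topspace by (rule subsetD[rotated])
      then have m1: "m \<ge> 1" unfolding topspace_kirch by simp
      have "m \<in> kirch closure_of {x + b * n | n. True}"
      proof (rule closure_suff[OF m1 b(1)])
        fix q :: nat assume q: "prime q" "q dvd b"
        show "q dvd m \<or> int q dvd (int m - int x)"
        proof (cases "q = 2")
          case True
          have "odd x"
          proof
            assume "even x"
            then have "2 dvd gcd x b" using q True by simp
            then have "2 dvd (1::nat)" using b(3) by (metis coprime_iff_gcd_eq_1)
            then show False by simp
          qed
          show ?thesis
          proof (cases "even m")
            case True then show ?thesis using \<open>q = 2\<close> by simp
          next
            case False
            then obtain a where a: "m = 2 * a + 1" by (elim oddE)
            obtain c where c: "x = 2 * c + 1" using \<open>odd x\<close> by (elim oddE)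
            have "int m - int x = 2 * (int a - int c)" using a c by simp
            then show ?thesis using \<open>q = 2\<close> by simp
          qed
        next
          case False
          have "q dvd s"
          proof -
            have "\<not> q dvd 2 ^ k"
            proof
              assume "q dvd 2 ^ k"
              then have "q dvd 2" using prime_dvd_power[OF q(1)] by blast
              then show False using False q(1) two_is_prime_nat prime_dvd_prime_eq by blast
            qed
            moreover have "q dvd 2 ^ k * s" using q(2) s(1) by simp
            ultimately show ?thesis using prime_dvd_mult_iff[OF q(1)] by blast
          qed
          have a1: "q dvd m \<or> int q dvd (int m - int p)" using closure_nec[OF m(2)[unfolded Wp_def] q(1) \<open>q dvd s\<close>] .
          have a2: "q dvd m \<or> int q dvd (int m - int (2 * p))" using closure_nec[OF m(3)[unfolded W2p_def] q(1) \<open>q dvd s\<close>] .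
          show ?thesis
          proof (rule ccontr)
            assume "\<not> ?thesis"
            then have "int q dvd (int m - int p)" "int q dvd (int m - int (2 * p))" using a1 a2 by simp_all
            then have "int q dvd (int m - int p) - (int m - int (2 * p))" by (rule dvd_diff)
            moreover have "(int m - int p) - (int m - int (2 * p)) = int p" by simp
            ultimately have "int q dvd int p" by simp
            then have "q dvd p" by (simp only: int_dvd_int_iff)
            then have "q = p" using q p by (simp add: prime_dvd_prime_eq)
            then have "is_unit p" using coprime_common_divisor[OF cps dvd_refl] \<open>q dvd s\<close> by simp
            then show False using p by simp
          qed
        qed
      qed
      then have "m \<in> kirch closure_of (U x)" using closure_of_mono[OF b(4)] by (rule subsetD[rotated])
      then show "m \<in> B" using UB m(1) by (intro subsetD[OF UB] IntI)
    qed
  qed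
  then show "B \<in> kirchF {y0, p, 2 * p}" .
qed

lemma dir2:
  fixes p y0 :: nat
  assumes p: "prime p" "odd p" and y0: "y0 = 1 \<or> y0 = 2"
    and U: "U y0 \<in> kirch_nbhds y0" "U p \<in> kirch_nbhds p" "U (2 * p) \<in> kirch_nbhds (2 * p)"
  shows "\<exists>m. m \<in> kirch closure_of (U y0) \<and> m \<in> kirch closure_of (U p) \<and>
     m \<in> kirch closure_of (U (2 * p)) \<and> int p dvd (int m - int y0) \<and> \<not> p dvd m"
proof -
  obtain b1 where b1: "b1 \<ge> 1" "squarefree b1" "coprime y0 b1" "{y0 + b1 * n | n. True} \<subseteq> U y0"
    using U(1) by (rule nbhd_basic)
  obtain b2 where b2: "b2 \<ge> 1" "squarefree b2" "coprime p b2" "{p + b2 * n | n. True} \<subseteq> U p"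
    using U(2) by (rule nbhd_basic)
  obtain b3 where b3: "b3 \<ge> 1" "squarefree b3" "coprime (2 * p) b3" "{2 * p + b3 * n | n. True} \<subseteq> U (2 * p)"
    using U(3) by (rule nbhd_basic)
  have p3: "p \<ge> 3" using prime_ge_2_nat[OF p(1)] p(2) by (cases "p = 2") auto
  have b10: "b1 \<noteq> 0" using b1(1) by simp
  have pnu: "\<not> is_unit p" using p(1) not_prime_unit by blast
  obtain k s1 where s1: "b1 = p ^ k * s1" "\<not> p dvd s1"
    using multiplicity_decompose'[OF b10 pnu] by blast
  have np2: "\<not> p dvd b2"
  proof
    assume "p dvd b2"
    then have "is_unit p" using coprime_common_divisor[OF b2(3) dvd_refl] by simp
    then show False using p by simp
  qed
  have np3: "\<not> p dvd b3"
  proof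
    assume "p dvd b3"
    then have "is_unit p" using coprime_common_divisor[OF b3(3)] by simp
    then show False using p by simp
  qed
  define R where "R = s1 * b2 * b3"
  have npR: "\<not> p dvd R" unfolding R_def using s1(2) np2 np3 p(1) by (simp add: prime_dvd_mult_iff)
  have R0: "R \<noteq> 0"
  proof
    assume "R = 0" then show False using npR by simp
  qed
  have "coprime R p" using npR p(1) by (metis coprime_commute prime_imp_coprime)
  then have gRp: "gcd R p = 1" by simp
  obtain X Y where XY: "R * X = p * Y + 1" using bezout_nat[OF R0, of p] gRp by auto
  define m where "m = y0 * (R * X)"
  have y01: "y0 \<ge> 1" using y0 by auto
  have m_eq: "m = y0 * p * Y + y0" unfolding m_def XY by (simp add: algebra_simps)
  have m1: "m \<ge> 1" using m_eq y01 by simp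
  have Rm: "R dvd m" unfolding m_def by simp
  have md: "int p dvd (int m - int y0)"
  proof -
    have "int m - int y0 = int p * (int y0 * int Y)" using m_eq by (simp add: algebra_simps)
    then show ?thesis by simp
  qed
  have npy0: "\<not> p dvd y0"
  proof
    assume "p dvd y0"
    then have "p \<le> y0" using y01 by (simp add: dvd_imp_le)
    then show False using y0 p3 by auto
  qed
  have npm: "\<not> p dvd m"
  proof
    assume "p dvd m"
    then have "p dvd y0 * p * Y + y0" using m_eq by simp
    then have "p dvd y0" by (simp add: dvd_add_right_iff)
    then show False using npy0 by simp
  qed
  have qR: "q dvd m" if "prime q" "q dvd R" for q using that Rm by (meson dvd_trans)
  have c1: "m \<in> kirch closure_of {y0 + b1 * n | n. True}"
  proof (rule closure_suff[OF m1 b1(1)])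
    fix q :: nat assume q: "prime q" "q dvd b1"
    show "q dvd m \<or> int q dvd (int m - int y0)"
    proof (cases "q = p")
      case True then show ?thesis using md by simp
    next
      case False
      have "\<not> q dvd p ^ k"
      proof
        assume "q dvd p ^ k"
        then have "q dvd p" using prime_dvd_power[OF q(1)] by blast
        then show False using False q(1) p(1) prime_dvd_prime_eq by blast
      qed
      moreover have "q dvd p ^ k * s1" using q(2) s1(1) by simp
      ultimately have "q dvd s1" using prime_dvd_mult_iff[OF q(1)] by blast
      then have "q dvd R" unfolding R_def by simp
      then show ?thesis using qR q by blast
    qed
  qed
  have c2: "m \<in> kirch closure_of {p + b2 * n | n. True}"
  proof (rule closure_suff[OF m1 b2(1)])
    fix q :: nat assume q: "prime q" "q dvd b2"
    then have "q dvd R" unfolding R_def by simp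
    then show "q dvd m \<or> int q dvd (int m - int p)" using qR q by blast
  qed
  have c3: "m \<in> kirch closure_of {2 * p + b3 * n | n. True}"
  proof (rule closure_suff[OF m1 b3(1)])
    fix q :: nat assume q: "prime q" "q dvd b3"
    then have "q dvd R" unfolding R_def by simp
    then show "q dvd m \<or> int q dvd (int m - int (2 * p))" using qR q by blast
  qed
  show ?thesis
    using closure_of_mono[OF b1(4)] closure_of_mono[OF b2(4)] closure_of_mono[OF b3(4)]
      c1 c2 c3 md npm by blast
qed

lemma key:
  fixes x p y0 :: nat
  assumes x3: "x \<ge> 3" and p: "prime p" "odd p" and px: "\<not> p dvd x" and y0: "y0 = 1 \<or> y0 = 2"
    and incl: "kirchF {y0, x} \<subseteq> kirchF {y0, p, 2 * p}"
  shows "int p dvd (int x - int y0)"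
proof -
  define Xp where "Xp = {x + p * n | n. True}"
  have p1: "p \<ge> 1" using prime_ge_2_nat[OF p(1)] by linarith
  have "coprime p x" by (rule prime_imp_coprime[OF p(1) px])
  then have cxp: "coprime x p" by (simp add: coprime_commute)
  have x1: "x \<ge> 1" using x3 by simp
  have oX: "openin kirch Xp" unfolding Xp_def by (rule basic_ap[OF x1 p1 cxp squarefree_prime[OF p(1)]])
  have "x \<in> Xp" unfolding Xp_def by (intro CollectI exI[of _ 0]) simp
  then have NX: "Xp \<in> kirch_nbhds x" using oX by (simp add: kirch_nbhds_def)
  have NT: "topspace kirch \<in> kirch_nbhds y0"
    unfolding kirch_nbhds_def using y0 topspace_kirch openin_topspace[of kirch] by force
  define B where "B = kirch closure_of Xp"
  define U where "U = (\<lambda>z. if z = x then Xp else topspace kirch)"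
  have ne: "y0 \<noteq> x" using x3 y0 by auto
  have "B \<in> kirchF {y0, x}" unfolding kirchF_def
  proof (intro CollectI conjI exI[of _ U])
    show "B \<subseteq> {1..}" unfolding B_def using closure_of_subset_topspace[of kirch Xp] by (simp only: topspace_kirch)
    show "\<forall>y\<in>{y0, x}. U y \<in> kirch_nbhds y" using NX NT ne unfolding U_def by simp
    show "(\<Inter>y\<in>{y0, x}. kirch closure_of U y) \<subseteq> B" unfolding U_def B_def using ne by simp
  qed
  then have "B \<in> kirchF {y0, p, 2 * p}" using incl by (rule subsetD[rotated])
  then have "\<exists>V. (\<forall>y\<in>{y0, p, 2 * p}. V y \<in> kirch_nbhds y) \<and> (\<Inter>y\<in>{y0, p, 2 * p}. kirch closure_of V y) \<subseteq> B"
    unfolding kirchF_def mem_Collect_eq by (rule conjunct2)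
  then obtain V where V: "\<forall>y\<in>{y0, p, 2 * p}. V y \<in> kirch_nbhds y"
    and VB: "(\<Inter>y\<in>{y0, p, 2 * p}. kirch closure_of V y) \<subseteq> B" by (elim exE conjE)
  obtain m where m: "m \<in> kirch closure_of (V y0)" "m \<in> kirch closure_of (V p)"
     "m \<in> kirch closure_of (V (2 * p))" "int p dvd (int m - int y0)" "\<not> p dvd m"
  proof -
    have Vs: "V y0 \<in> kirch_nbhds y0" "V p \<in> kirch_nbhds p" "V (2 * p) \<in> kirch_nbhds (2 * p)"
      using V by simp_all
    show ?thesis using dir2[OF p y0 Vs] that by blast
  qed
  have "m \<in> (\<Inter>y\<in>{y0, p, 2 * p}. kirch closure_of V y)" using m(1-3) by simp
  then have "m \<in> B" using VB by (rule subsetD[rotated])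
  then have "p dvd m \<or> int p dvd (int m - int x)"
    unfolding B_def Xp_def by (rule closure_nec[OF _ p(1) dvd_refl])
  then have "int p dvd (int m - int x)" using m(5) by blast
  then have "int p dvd (int m - int y0) - (int m - int x)" using m(4) by (rule dvd_diff[rotated])
  then show ?thesis by simp
qed

theorem lemma3p15:
  fixes x p :: nat
  assumes "x \<ge> 3" and "prime p" and "odd p"
  shows "p dvd x \<longleftrightarrow>
    (kirchF {1, x} \<subseteq> kirchF {1, p, 2 * p} \<and> kirchF {2, x} \<subseteq> kirchF {2, p, 2 * p})"
proof
  assume "p dvd x"
  then show "kirchF {1, x} \<subseteq> kirchF {1, p, 2 * p} \<and> kirchF {2, x} \<subseteq> kirchF {2, p, 2 * p}"
    using dir1[OF assms] by auto
next
  assume H: "kirchF {1, x} \<subseteq> kirchF {1, p, 2 * p} \<and> kirchF {2, x} \<subseteq> kirchF {2, p, 2 * p}"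
  show "p dvd x"
  proof (rule ccontr)
    assume npx: "\<not> p dvd x"
    have a: "int p dvd (int x - int 1)" using key[OF assms npx, of 1] H by simp
    have b: "int p dvd (int x - int 2)" using key[OF assms npx, of 2] H by simp
    have "int p dvd (int x - int 1) - (int x - int 2)" using a b by (rule dvd_diff)
    then have "p dvd 1" by simp
    then show False using assms(2) by simp
  qed
qed

end
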